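(* Fix $a\in[1/2,1)$. For every $x\in\mathbb{R}$, the function $\theta\mapsto p_\theta^a(x)$ is continuously differentiable on $(-a/(1+a),\infty)\times\mathbb{R}\times(0,\infty)$, and its partial derivatives are continuous as functions of $(x,\theta)\in\mathbb{R}\times(-a/(1+a),\infty)\times\mathbb{R}\times(0,\infty)$.
   Context: $p_\theta$ is the GEV density: for $\theta=(\gamma,\mu,\sigma)\in\mathbb{R}\times\mathbb{R}\times(0,\infty)$, $p_\theta(x)=\sigma^{-1}e^{-u}u^{\gamma+1}\mathbf 1(1+\gamma z>0)$ with $z=(x-\mu)/\sigma$, $u=(1+\gamma z)^{-1/\gamma}$ for $\gamma\ne0$ and $u=e^{-z}$ for $\gamma=0$. *)

theory Defs
  imports "HOL-Analysis.Analysis"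
begin

definition gev_u :: "real \<Rightarrow> real \<Rightarrow> real \<Rightarrow> real \<Rightarrow> real" where
  "gev_u \<gamma> \<mu> \<sigma> x =
     (let z = (x - \<mu>) / \<sigma> in
      if \<gamma> = 0 then exp (- z) else (1 + \<gamma> * z) powr (- 1 / \<gamma>))"

definition gev_density :: "real \<times> real \<times> real \<Rightarrow> real \<Rightarrow> real" where
  "gev_density \<theta> x =
     (case \<theta> of (\<gamma>, \<mu>, \<sigma>) \<Rightarrow>
        (let z = (x - \<mu>) / \<sigma>; u = gev_u \<gamma> \<mu> \<sigma> x in
         if 1 + \<gamma> * z > 0 then (1 / \<sigma>) * exp (- u) * u powr (\<gamma> + 1) else 0))"

definition Theta_a :: "real \<Rightarrow> (real \<times> real \<times> real) set" where
  "Theta_a a = {- a / (1 + a)<..} \<times> UNIV \<times> {0<..}"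

end

theory Submission
  imports Defs
begin


definition phi :: "real \<Rightarrow> real" where
  "phi y = (if y = 0 then 1 else ln (1 + y) / y)"
definition phi' :: "real \<Rightarrow> real" where
  "phi' y = (if y = 0 then - 1/2 else (y / (1 + y) - ln (1 + y)) / y^2)"

definition cphi :: "nat \<Rightarrow> real" where "cphi n = (-1)^n / real (n+1)"

lemma cphi_summable: "\<bar>y\<bar> < 1 \<Longrightarrow> summable (\<lambda>n. cphi n * y^n)"
proof -
  assume y: "\<bar>y\<bar> < 1"
  have "summable (\<lambda>n. \<bar>y\<bar>^n)" using y by (simp add: summable_geometric)
  moreover have "norm (cphi n * y^n) \<le> \<bar>y\<bar>^n" for n
    by (simp add: cphi_def abs_mult power_abs divide_le_eq_1 mult_le_cancel_right1 field_simps)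
  ultimately show ?thesis by (rule summable_comparison_test'[where N=0])
qed

lemma phi_series: "\<bar>y\<bar> < 1 \<Longrightarrow> phi y = (\<Sum>n. cphi n * y^n)"
proof -
  assume y: "\<bar>y\<bar> < 1"
  show ?thesis
  proof (cases "y = 0")
    case True
    have "(\<Sum>n. cphi n * 0^n) = cphi 0" by (rule powser_zero)
    then show ?thesis using True by (simp add: phi_def cphi_def)
  next
    case False
    have "ln (1+y) = (\<Sum> n. (-1)^n * (1 / real (n + 1)) * ((1+y) - 1)^(Suc n))"
      using y by (intro ln_series) auto
    also have "\<dots> = (\<Sum>n. y * (cphi n * y^n))"
      by (simp add: cphi_def field_simps)
    also have "\<dots> = y * (\<Sum>n. cphi n * y^n)"
      using cphi_summable[OF y] by (rule suminf_mult)
    finally show ?thesis using False by (simp add: phi_def)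
  qed
qed

lemma phi_deriv_nz: "y \<noteq> 0 \<Longrightarrow> y > -1 \<Longrightarrow> (phi has_real_derivative phi' y) (at y)"
proof -
  assume y: "y \<noteq> 0" "y > -1"
  have ev: "eventually (\<lambda>t. t \<in> -{0}) (nhds y)" using y by (intro eventually_nhds_in_open) auto
  have "((\<lambda>t. ln (1+t) / t) has_real_derivative (y / (1 + y) - ln (1 + y)) / y^2) (at y)"
    using y by (auto intro!: derivative_eq_intros simp: field_simps power2_eq_square)
  then show ?thesis
    by (subst DERIV_cong_ev[OF refl _ refl, where g="\<lambda>t. ln (1+t) / t"])
       (use ev y in \<open>auto elim!: eventually_mono simp: phi_def phi'_def\<close>)
qed

lemma phi'_series: "\<bar>y\<bar> < 1 \<Longrightarrow> phi' y = (\<Sum>n. diffs cphi n * y^n)"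
proof -
  assume y: "\<bar>y\<bar> < 1"
  have ev: "eventually (\<lambda>t. t \<in> {-1<..<1}) (nhds y)" using y by (intro eventually_nhds_in_open) auto
  have D: "((\<lambda>t. \<Sum>n. cphi n * t^n) has_real_derivative (\<Sum>n. diffs cphi n * y^n)) (at y)"
    by (rule termdiffs_strong'[where K=1]) (use y cphi_summable in auto)
  show ?thesis
  proof (cases "y = 0")
    case True
    have "(\<Sum>n. diffs cphi n * 0^n) = diffs cphi 0" by (rule powser_zero)
    then show ?thesis using True by (simp add: diffs_def cphi_def phi'_def)
  next
    case False
    have "(phi has_real_derivative (\<Sum>n. diffs cphi n * y^n)) (at y)"
      by (subst DERIV_cong_ev[OF refl _ refl, where g="\<lambda>t. \<Sum>n. cphi n * t^n"])
         (use ev D in \<open>auto elim!: eventually_mono simp: phi_series\<close>)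
    moreover have "(phi has_real_derivative phi' y) (at y)" using phi_deriv_nz[of y] False y by auto
    ultimately show ?thesis by (metis DERIV_unique)
  qed
qed

lemma phi_deriv: "y > -1 \<Longrightarrow> (phi has_real_derivative phi' y) (at y)"
proof (cases "y = 0")
  case True
  have ev: "eventually (\<lambda>t. t \<in> {-1<..<1}) (nhds (0::real))" by (intro eventually_nhds_in_open) auto
  have D: "((\<lambda>t. \<Sum>n. cphi n * t^n) has_real_derivative (\<Sum>n. diffs cphi n * 0^n)) (at 0)"
    by (rule termdiffs_strong'[where K=1]) (use cphi_summable in auto)
  have "(\<Sum>n. diffs cphi n * (0::real)^n) = phi' 0" using phi'_series[of 0] by simp
  with D have "((\<lambda>t. \<Sum>n. cphi n * t^n) has_real_derivative phi' 0) (at 0)" by simp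
  then show ?thesis using True
    by (subst DERIV_cong_ev[OF refl _ refl, where g="\<lambda>t. \<Sum>n. cphi n * t^n"])
       (use ev in \<open>auto elim!: eventually_mono simp: phi_series\<close>)
next
  case False
  then show "y > -1 \<Longrightarrow> ?thesis" by (rule phi_deriv_nz)
qed

lemma phi'_cont: "y > -1 \<Longrightarrow> isCont phi' y"
proof -
  assume y: "y > -1"
  show ?thesis
  proof (cases "\<bar>y\<bar> < 1")
    case True
    have ev: "eventually (\<lambda>t. t \<in> {-1<..<1}) (nhds y)" using True by (intro eventually_nhds_in_open) auto
    have s: "summable (\<lambda>n. diffs cphi n * ((1 + \<bar>y\<bar>)/2)^n)"
      by (rule termdiff_converges[where K=1]) (use True cphi_summable in auto)
    have "isCont (\<lambda>t. \<Sum>n. diffs cphi n * t^n) y"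
      by (rule isCont_powser[OF s]) (use True in auto)
    then show ?thesis
      by (subst isCont_cong[where g="\<lambda>t. \<Sum>n. diffs cphi n * t^n"])
         (use ev in \<open>auto elim!: eventually_mono simp: phi'_series\<close>)
  next
    case False
    then have y0: "y > 0" using y by auto
    have ev: "eventually (\<lambda>t. t \<in> {0<..}) (nhds y)" using y0 by (intro eventually_nhds_in_open) auto
    have "isCont (\<lambda>t. (t / (1 + t) - ln (1 + t)) / t^2) y"
      using y0 by (intro continuous_intros) auto
    then show ?thesis
      by (subst isCont_cong[where g="\<lambda>t. (t / (1 + t) - ln (1 + t)) / t^2"])
         (use ev in \<open>auto elim!: eventually_mono simp: phi'_def\<close>)
  qed
qed

lemma phi_cont: "y > -1 \<Longrightarrow> isCont phi y"
  using phi_deriv by (rule DERIV_isCont)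




lemma phi_has_derivative[derivative_intros]:
  "(f has_derivative f') (at x within S) \<Longrightarrow> f x > -1 \<Longrightarrow>
   ((\<lambda>x. phi (f x)) has_derivative (\<lambda>h. f' h * phi' (f x))) (at x within S)"
  by (rule DERIV_compose_FDERIV[OF phi_deriv])

definition psi :: "real \<Rightarrow> real \<Rightarrow> real \<Rightarrow> real \<Rightarrow> real" where
  "psi x g m s = (x - m) / s * phi (g * ((x - m) / s))"
definition psig :: "real \<Rightarrow> real \<Rightarrow> real \<Rightarrow> real \<Rightarrow> real" where
  "psig x g m s = ((x - m) / s)^2 * phi' (g * ((x - m) / s))"
definition psiz :: "real \<Rightarrow> real \<Rightarrow> real \<Rightarrow> real \<Rightarrow> real" where
  "psiz x g m s = phi (g * ((x - m) / s)) + g * ((x - m) / s) * phi' (g * ((x - m) / s))"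

lemma psi_deriv:
  assumes "s > 0" "1 + g * ((x - m)/s) > 0"
  shows "((\<lambda>t. psi x (fst t) (fst (snd t)) (snd (snd t))) has_derivative
     (\<lambda>h. psig x g m s * fst h + psiz x g m s * (- fst (snd h) / s - (x - m)/s * snd (snd h) / s))) (at (g,m,s))"
  unfolding psi_def
  using assms
  apply (auto intro!: derivative_eq_intros)
  apply (rule ext)
  apply (simp add: psig_def psiz_def field_simps power2_eq_square)
  done

definition FF :: "real \<Rightarrow> real \<Rightarrow> real \<Rightarrow> real \<Rightarrow> real \<Rightarrow> real" where
  "FF a x g m s = exp (a * (- ln s - exp (- psi x g m s) - (g + 1) * psi x g m s))"

definition D1f :: "real \<Rightarrow> real \<Rightarrow> real \<Rightarrow> real \<Rightarrow> real \<Rightarrow> real" where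
  "D1f a x g m s = a * FF a x g m s * ((exp (- psi x g m s) - (g + 1)) * psig x g m s - psi x g m s)"
definition D2f :: "real \<Rightarrow> real \<Rightarrow> real \<Rightarrow> real \<Rightarrow> real \<Rightarrow> real" where
  "D2f a x g m s = a * FF a x g m s * ((exp (- psi x g m s) - (g + 1)) * psiz x g m s * (- 1 / s))"
definition D3f :: "real \<Rightarrow> real \<Rightarrow> real \<Rightarrow> real \<Rightarrow> real \<Rightarrow> real" where
  "D3f a x g m s = a * FF a x g m s * (- 1 / s + (exp (- psi x g m s) - (g + 1)) * psiz x g m s * (- ((x - m) / s) / s))"

lemma FF_deriv:
  assumes "s > 0" "1 + g * ((x - m)/s) > 0"
  shows "((\<lambda>t. FF a x (fst t) (fst (snd t)) (snd (snd t))) has_derivative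
     (\<lambda>h. D1f a x g m s * fst h + D2f a x g m s * fst (snd h) + D3f a x g m s * snd (snd h))) (at (g,m,s))"
  unfolding FF_def
  using assms
  apply (auto intro!: derivative_eq_intros psi_deriv)
  apply (rule ext)
  apply (simp add: D1f_def D2f_def D3f_def FF_def field_simps)
  done




lemma psi_eq:
  assumes "g \<noteq> 0" "1 + g * ((x - m) / s) > 0"
  shows "psi x g m s = ln (1 + g * ((x - m) / s)) / g"
proof (cases "(x - m) / s = 0")
  case True then show ?thesis unfolding psi_def True by simp
next
  case False
  then have "g * ((x - m) / s) \<noteq> 0" using assms by simp
  then show ?thesis using False assms(1) by (simp add: psi_def phi_def field_simps)
qed

lemma psig_eq:
  assumes "g \<noteq> 0" "1 + g * ((x - m) / s) > 0" "1 + g * ((x - m) / s) \<noteq> 1"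
  shows "psig x g m s = (1 - 1 / (1 + g * ((x - m) / s)) - ln (1 + g * ((x - m) / s))) / g^2"
proof -
  define z where "z = (x - m) / s"
  have z: "z \<noteq> 0" "g * z \<noteq> 0" using assms by (auto simp: z_def)
  have "psig x g m s = z^2 * ((g*z / (1 + g*z) - ln (1 + g*z)) / (g*z)^2)"
    using z by (simp add: psig_def phi'_def z_def)
  also have "\<dots> = (g*z / (1 + g*z) - ln (1 + g*z)) / g^2"
    using z by (simp add: power_mult_distrib)
  also have "g*z / (1 + g*z) = 1 - 1 / (1 + g*z)"
    using assms(2) unfolding z_def[symmetric] by (simp add: field_simps)
  finally show ?thesis by (simp add: z_def)
qed

lemma psiz_eq:
  assumes "g \<noteq> 0" "1 + g * ((x - m) / s) > 0" "1 + g * ((x - m) / s) \<noteq> 1"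
  shows "psiz x g m s = 1 / (1 + g * ((x - m) / s))"
proof -
  define z where "z = (x - m) / s"
  have z: "z \<noteq> 0" "g * z \<noteq> 0" using assms by (auto simp: z_def)
  have "psiz x g m s = ln (1 + g*z) / (g*z) + g*z * ((g*z / (1 + g*z) - ln (1 + g*z)) / (g*z)^2)"
    using z by (simp add: psiz_def phi'_def phi_def z_def)
  also have "\<dots> = ln (1 + g*z) / (g*z) + (g*z / (1 + g*z) - ln (1 + g*z)) / (g*z)"
    using z by (simp add: power2_eq_square)
  also have "\<dots> = (g*z / (1 + g*z)) / (g*z)"
    by (simp add: diff_divide_distrib)
  also have "\<dots> = 1 / (1 + g*z)"
    using z by simp
  finally show ?thesis by (simp add: z_def)
qed

definition Bf :: "real \<Rightarrow> real \<Rightarrow> real \<Rightarrow> real \<Rightarrow> real" where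
  "Bf x g m s = 3 * (\<bar>g\<bar> + 1) / g^2 + 1 / \<bar>g\<bar> + (1 + (\<bar>g\<bar> + 1) * (1 + \<bar>(x - m) / s\<bar>)) / s"

lemma ln_abs_le_inv: "0 < (w::real) \<Longrightarrow> w < 1 \<Longrightarrow> \<bar>ln w\<bar> \<le> 1 / w"
proof -
  assume w: "0 < w" "w < 1"
  have "ln (1/w) \<le> 1/w - 1" using w by (intro ln_le_minus_one) auto
  moreover have "ln w < 0" using w by simp
  ultimately show ?thesis using w by (simp add: ln_div)
qed

lemma h_bounds:
  assumes s: "s > 0" and g: "g \<noteq> 0" and w0: "1 + g * ((x - m) / s) > 0" and w1: "1 + g * ((x - m) / s) < 1"
  defines "w \<equiv> 1 + g * ((x - m) / s)" and "E \<equiv> exp (- psi x g m s)"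
  shows "\<bar>(E - (g + 1)) * psig x g m s - psi x g m s\<bar> \<le> (1 + E) / w * Bf x g m s"
    and "\<bar>(E - (g + 1)) * psiz x g m s * (- 1 / s)\<bar> \<le> (1 + E) / w * Bf x g m s"
    and "\<bar>- 1 / s + (E - (g + 1)) * psiz x g m s * (- ((x - m) / s) / s)\<bar> \<le> (1 + E) / w * Bf x g m s"
proof -
  have wpos: "w > 0" "w < 1" using w0 w1 by (auto simp: w_def)
  define q where "q = 1 / w"
  have q1: "q \<ge> 1" using wpos by (simp add: q_def)
  have E0: "E \<ge> 0" by (simp add: E_def)
  define G where "G = \<bar>g\<bar>"
  have G: "G > 0" using g by (simp add: G_def)
  have lnw: "\<bar>ln w\<bar> \<le> q" using ln_abs_le_inv[OF wpos] unfolding q_def .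
  have psi: "\<bar>psi x g m s\<bar> \<le> q / G"
  proof -
    have "psi x g m s = ln w / g" unfolding w_def by (rule psi_eq[OF g w0])
    then have "\<bar>psi x g m s\<bar> = \<bar>ln w\<bar> / G" by (simp add: abs_div G_def)
    also have "\<dots> \<le> q / G" by (rule divide_right_mono[OF lnw]) (use G in simp)
    finally show ?thesis .
  qed
  have psig: "\<bar>psig x g m s\<bar> \<le> 3 * q / G^2"
  proof -
    have "\<bar>1 - q - ln w\<bar> \<le> 3 * q" using lnw q1 by (simp add: abs_le_iff)
    then have *: "\<bar>1 - q - ln w\<bar> / G^2 \<le> 3 * q / G^2" by (rule divide_right_mono) simp
    have "psig x g m s = (1 - q - ln w) / g^2" unfolding w_def q_def
      by (rule psig_eq[OF g w0]) (use w1 in linarith)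
    then have "\<bar>psig x g m s\<bar> = \<bar>1 - q - ln w\<bar> / G^2" by (simp add: abs_div G_def)
    with * show ?thesis by simp
  qed
  have psiz: "psiz x g m s = q" using psiz_eq[OF g w0] w1 unfolding w_def[symmetric] q_def by simp
  have A: "\<bar>E - (g + 1)\<bar> \<le> (1 + E) * (G + 1)"
  proof -
    have "\<bar>E - (g + 1)\<bar> \<le> E + G + 1" unfolding G_def using E0 by (auto simp: abs_if)
    moreover have "E * G \<ge> 0" using E0 G by simp
    ultimately show ?thesis by (simp add: algebra_simps)
  qed
  have z: "\<bar>(x - m) / s\<bar> \<ge> 0" by simp
  have Bge: "3 * (G + 1) / G^2 + 1 / G \<le> Bf x g m s" "(G + 1) / s \<le> Bf x g m s"
      "(1 + (G + 1) * (1 + \<bar>(x - m) / s\<bar>)) / s \<le> Bf x g m s"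
  proof -
    have g2: "g^2 = G^2" by (simp add: G_def)
    have t1: "0 \<le> 3 * (G + 1) / G^2 + 1 / G" using G by simp
    have t3: "0 \<le> (1 + (G + 1) * (1 + \<bar>(x - m) / s\<bar>)) / s" using G s by simp
    have t2: "(G + 1) / s \<le> (1 + (G + 1) * (1 + \<bar>(x - m) / s\<bar>)) / s"
      using G s by (intro divide_right_mono) (auto simp: algebra_simps)
    show "3 * (G + 1) / G^2 + 1 / G \<le> Bf x g m s" "(G + 1) / s \<le> Bf x g m s"
      "(1 + (G + 1) * (1 + \<bar>(x - m) / s\<bar>)) / s \<le> Bf x g m s"
      unfolding Bf_def G_def[symmetric] g2 using t1 t2 t3 by linarith+
  qed
  have eq: "(1 + E) / w = (1 + E) * q" by (simp add: q_def)
  show "\<bar>(E - (g + 1)) * psig x g m s - psi x g m s\<bar> \<le> (1 + E) / w * Bf x g m s"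
  proof -
    have "\<bar>(E - (g + 1)) * psig x g m s - psi x g m s\<bar> \<le> \<bar>E - (g + 1)\<bar> * \<bar>psig x g m s\<bar> + \<bar>psi x g m s\<bar>"
      by (metis abs_mult abs_triangle_ineq4)
    also have "\<dots> \<le> (1 + E) * (G + 1) * (3 * q / G^2) + q / G"
      by (intro add_mono mult_mono A psig psi) (use E0 G in auto)
    also have "\<dots> \<le> (1 + E) * q * (3 * (G + 1) / G^2 + 1 / G)"
      using E0 G q1 by (simp add: field_simps)
    also have "\<dots> \<le> (1 + E) * q * Bf x g m s"
      using Bge(1) E0 q1 by (intro mult_left_mono) auto
    finally show ?thesis by (simp add: eq)
  qed
  show "\<bar>(E - (g + 1)) * psiz x g m s * (- 1 / s)\<bar> \<le> (1 + E) / w * Bf x g m s"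
  proof -
    have "\<bar>(E - (g + 1)) * psiz x g m s * (- 1 / s)\<bar> = \<bar>E - (g + 1)\<bar> * q / s"
      using s q1 by (simp add: psiz abs_mult)
    also have "\<dots> \<le> (1 + E) * (G + 1) * q / s"
      by (intro divide_right_mono mult_right_mono A) (use s q1 in auto)
    also have "\<dots> = (1 + E) * q * ((G + 1) / s)" by simp
    also have "\<dots> \<le> (1 + E) * q * Bf x g m s"
      using Bge(2) E0 q1 by (intro mult_left_mono) auto
    finally show ?thesis by (simp add: eq)
  qed
  show "\<bar>- 1 / s + (E - (g + 1)) * psiz x g m s * (- ((x - m) / s) / s)\<bar> \<le> (1 + E) / w * Bf x g m s"
  proof -
    define Z where "Z = \<bar>(x - m) / s\<bar>"
    have "\<bar>- 1 / s + (E - (g + 1)) * psiz x g m s * (- ((x - m) / s) / s)\<bar> \<le> 1 / s + \<bar>E - (g + 1)\<bar> * q * Z / s"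
    proof -
      have "\<bar>- 1 / s + (E - (g + 1)) * psiz x g m s * (- ((x - m) / s) / s)\<bar> \<le>
         \<bar>- 1 / s\<bar> + \<bar>(E - (g + 1)) * psiz x g m s * (- ((x - m) / s) / s)\<bar>" by (rule abs_triangle_ineq)
      also have "\<dots> = 1 / s + \<bar>E - (g + 1)\<bar> * q * Z / s"
        using s q1 by (simp add: psiz abs_mult Z_def abs_div)
      finally show ?thesis .
    qed
    also have "\<dots> \<le> (1 + E) * q / s + (1 + E) * (G + 1) * q * Z / s"
    proof -
      have "1 * q \<le> (1 + E) * q" by (rule mult_right_mono) (use E0 q1 in auto)
      then have "1 \<le> (1 + E) * q" using q1 by linarith
      then have c1: "1 / s \<le> (1 + E) * q / s" using s by (simp add: divide_right_mono)
      have c2: "\<bar>E - (g + 1)\<bar> * q * Z / s \<le> (1 + E) * (G + 1) * q * Z / s"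
        by (intro divide_right_mono mult_right_mono A) (use s q1 Z_def in auto)
      show ?thesis using c1 c2 by linarith
    qed
    also have "\<dots> = (1 + E) * q * ((1 + (G + 1) * Z) / s)" by (simp add: add_divide_distrib algebra_simps)
    also have "\<dots> \<le> (1 + E) * q * Bf x g m s"
    proof (intro mult_left_mono)
      show "(1 + (G + 1) * Z) / s \<le> Bf x g m s"
      proof -
        have "(G + 1) * Z \<le> (G + 1) * (1 + Z)" using G by (intro mult_left_mono) auto
        then have "(1 + (G + 1) * Z) / s \<le> (1 + (G + 1) * (1 + Z)) / s"
          using s by (intro divide_right_mono) auto
        then show ?thesis using Bge(3) unfolding Z_def by linarith
      qed
    qed (use E0 q1 in auto)
    finally show ?thesis by (simp add: eq)
  qed
qed

lemma FF_neg:
  assumes a: "a > 0" and s: "s > 0" and g: "g < 0" and w0: "1 + g * ((x - m) / s) > 0"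
    and w1: "1 + g * ((x - m) / s) < 1" and d: "\<delta> > 0" and cd: "1 + \<delta> \<le> - a * (g + 1) / g"
  defines "w \<equiv> 1 + g * ((x - m) / s)" and "E \<equiv> exp (- psi x g m s)"
  shows "FF a x g m s * ((1 + E) / w) \<le> 2 * exp (- a * ln s) * w powr \<delta>"
proof -
  have wp: "w > 0" "w < 1" using w0 w1 by (auto simp: w_def)
  have lw: "ln w < 0" using wp by simp
  have psi: "psi x g m s = ln w / g" unfolding w_def using g w0 by (intro psi_eq) auto
  have "- psi x g m s \<le> 0" using lw g by (simp add: psi divide_neg_neg less_imp_le)
  then have E1: "E \<le> 1" by (simp add: E_def)
  have E0: "E > 0" by (simp add: E_def)
  define c where "c = - a * (g + 1) / g"
  have K: "(g + 1) * (ln w / g) = - (c / a) * ln w" using g a by (simp add: c_def field_simps)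
  have "FF a x g m s = exp (a * (- ln s - E - (g + 1) * (ln w / g)))"
    by (simp add: FF_def E_def psi)
  also have "\<dots> = exp (- a * ln s - a * E + c * ln w)"
    unfolding K using a by (simp add: algebra_simps)
  also have "\<dots> \<le> exp (- a * ln s + c * ln w)"
    using a E0 by simp
  finally have F: "FF a x g m s \<le> exp (- a * ln s + c * ln w)" .
  have W: "(1 + E) / w \<le> 2 * exp (- ln w)"
    using wp E1 by (simp add: exp_minus divide_right_mono field_simps)
  have "FF a x g m s * ((1 + E) / w) \<le> exp (- a * ln s + c * ln w) * (2 * exp (- ln w))"
    by (intro mult_mono F W) (use wp E0 in auto)
  also have "\<dots> = 2 * (exp (- a * ln s + c * ln w) * exp (- ln w))" by simp
  also have "\<dots> = 2 * exp (- a * ln s + (c - 1) * ln w)"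
    unfolding mult_exp_exp by (simp add: algebra_simps)
  also have "\<dots> \<le> 2 * exp (- a * ln s + \<delta> * ln w)"
  proof -
    have "(c - 1) * ln w \<le> \<delta> * ln w"
      using cd lw unfolding c_def[symmetric] by (intro mult_right_mono_neg) auto
    then show ?thesis by simp
  qed
  also have "\<dots> = 2 * exp (- a * ln s) * w powr \<delta>"
    using wp by (simp add: powr_def mult_exp_exp algebra_simps)
  finally show ?thesis .
qed

definition Kp :: "real \<Rightarrow> real \<Rightarrow> real" where
  "Kp a g = (a * (g + 1) + 1 + 2 * g) * ln ((a * (g + 1) + 1 + 2 * g) / a)"

lemma FF_pos:
  assumes a: "a > 0" and s: "s > 0" and g: "g > 0" and w0: "1 + g * ((x - m) / s) > 0"
    and w1: "1 + g * ((x - m) / s) < 1"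
  defines "w \<equiv> 1 + g * ((x - m) / s)" and "E \<equiv> exp (- psi x g m s)"
  shows "FF a x g m s * ((1 + E) / w) \<le> 2 * exp (- a * ln s) * exp (Kp a g) * w"
proof -
  have wp: "w > 0" "w < 1" using w0 w1 by (auto simp: w_def)
  have lw: "ln w < 0" using wp by simp
  define v where "v = - psi x g m s"
  have psi: "psi x g m s = ln w / g" unfolding w_def using g w0 by (intro psi_eq) auto
  have lwv: "ln w = - g * v" using g by (simp add: v_def psi)
  have v0: "v > 0" using lw g by (simp add: v_def psi divide_neg_pos)
  have E: "E = exp v" by (simp add: E_def v_def)
  have E1: "E \<ge> 1" using v0 by (simp add: E)
  define N where "N = a * (g + 1) + 1 + 2 * g"
  have N: "N > 0" using a g by (simp add: N_def add_pos_pos)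
  have key: "- a * E + N * v \<le> Kp a g"
  proof -
    have "ln (a * E / N) \<le> a * E / N - 1" using a N E1 by (intro ln_le_minus_one) auto
    then have "ln a + v - ln N \<le> a * E / N - 1" using a N E1 by (simp add: ln_mult ln_div E)
    then have "N * (ln a + v - ln N) \<le> N * (a * E / N - 1)" using N by (intro mult_left_mono) auto
    then have "N * v \<le> a * E - N + N * (ln N - ln a)" using N by (simp add: algebra_simps)
    moreover have "Kp a g = N * (ln N - ln a)" using a N by (simp add: Kp_def N_def[symmetric] ln_div)
    ultimately show ?thesis using N by linarith
  qed
  have W: "(1 + E) / w \<le> 2 * exp v * exp (g * v)"
  proof -
    have "exp (g * v) = exp (- ln w)" using lwv by simp
    also have "\<dots> = 1 / w" using wp by (simp add: exp_minus inverse_eq_divide)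
    finally have "(1 + E) / w = (1 + E) * exp (g * v)" by simp
    also have "\<dots> \<le> 2 * exp v * exp (g * v)" using E1 by (simp add: E)
    finally show ?thesis .
  qed
  have "FF a x g m s = exp (a * (- ln s - E - (g + 1) * (- v)))"
    by (simp add: FF_def E_def v_def)
  also have "\<dots> = exp (a * (- ln s) - a * E + a * (g + 1) * v)"
    by (simp add: algebra_simps)
  finally have "FF a x g m s = exp (a * (- ln s) - a * E + a * (g + 1) * v)" .
  then have "FF a x g m s * ((1 + E) / w) \<le> exp (a * (- ln s) - a * E + a * (g + 1) * v) * (2 * exp v * exp (g * v))"
    using mult_left_mono[OF W, of "exp (a * (- ln s) - a * E + a * (g + 1) * v)"] by simp
  also have "\<dots> = 2 * (exp (a * (- ln s) - a * E + a * (g + 1) * v) * exp v * exp (g * v))"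
    by (simp add: algebra_simps)
  also have "\<dots> = 2 * exp (a * (- ln s) - a * E + a * (g + 1) * v + v + g * v)"
    by (simp add: mult_exp_exp)
  also have "a * (- ln s) - a * E + a * (g + 1) * v + v + g * v = - a * ln s + (- a * E + N * v) + (- g * v)"
    by (simp add: N_def algebra_simps)
  also have "2 * exp (- a * ln s + (- a * E + N * v) + (- g * v)) = 2 * exp (- a * ln s) * exp (- a * E + N * v) * exp (- g * v)"
    by (simp add: mult_exp_exp)
  also have "\<dots> \<le> 2 * exp (- a * ln s) * exp (Kp a g) * exp (- g * v)"
    using key by simp
  also have "exp (- g * v) = w" using wp lwv by (metis exp_ln mult_minus_left)
  finally show ?thesis .
qed




lemma ev_nhds_lt:
  fixes f :: "'a::{t2_space,perfect_space} \<Rightarrow> real"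
  assumes "isCont f p" "f p < c" shows "eventually (\<lambda>q. f q < c) (nhds p)"
proof -
  have "eventually (\<lambda>q. f q < c) (at p)"
    using assms by (intro order_tendstoD(2)[of f "f p"]) (auto simp: isCont_def)
  then have "eventually (\<lambda>q. q \<noteq> p \<longrightarrow> q \<in> UNIV \<longrightarrow> f q < c) (nhds p)"
    by (simp add: eventually_at_filter)
  then show ?thesis by eventually_elim (use assms in auto)
qed

lemma ev_nhds_gt:
  fixes f :: "'a::{t2_space,perfect_space} \<Rightarrow> real"
  assumes "isCont f p" "f p > c" shows "eventually (\<lambda>q. f q > c) (nhds p)"
proof -
  have "eventually (\<lambda>q. f q > c) (at p)"
    using assms by (intro order_tendstoD(1)[of f "f p"]) (auto simp: isCont_def)
  then have "eventually (\<lambda>q. q \<noteq> p \<longrightarrow> q \<in> UNIV \<longrightarrow> f q > c) (nhds p)"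
    by (simp add: eventually_at_filter)
  then show ?thesis by eventually_elim (use assms in auto)
qed

lemma pointwise_D:
  assumes a: "a > 0" and s: "s > 0" and g: "g \<noteq> 0" and w0: "1 + g * ((x - m) / s) > 0"
    and w1: "1 + g * ((x - m) / s) < 1"
    and C: "FF a x g m s * ((1 + exp (- psi x g m s)) / (1 + g * ((x - m) / s))) \<le> C * (1 + g * ((x - m) / s)) powr \<delta>"
  shows "\<bar>D1f a x g m s\<bar> \<le> a * Bf x g m s * C * (1 + g * ((x - m) / s)) powr \<delta>"
    and "\<bar>D2f a x g m s\<bar> \<le> a * Bf x g m s * C * (1 + g * ((x - m) / s)) powr \<delta>"
    and "\<bar>D3f a x g m s\<bar> \<le> a * Bf x g m s * C * (1 + g * ((x - m) / s)) powr \<delta>"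
    and "FF a x g m s \<le> C * (1 + g * ((x - m) / s)) powr (1 + \<delta>)"
proof -
  define w where "w = 1 + g * ((x - m) / s)"
  define E where "E = exp (- psi x g m s)"
  define F where "F = FF a x g m s"
  have wp: "w > 0" "w < 1" using w0 w1 by (auto simp: w_def)
  have F0: "F > 0" by (simp add: F_def FF_def)
  have E0: "E > 0" by (simp add: E_def)
  have B0: "Bf x g m s \<ge> 0" using s g by (simp add: Bf_def)
  have C': "F * ((1 + E) / w) \<le> C * w powr \<delta>" using C by (simp add: F_def E_def w_def)
  have hb: "\<bar>(E - (g + 1)) * psig x g m s - psi x g m s\<bar> \<le> (1 + E) / w * Bf x g m s"
    "\<bar>(E - (g + 1)) * psiz x g m s * (- 1 / s)\<bar> \<le> (1 + E) / w * Bf x g m s"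
    "\<bar>- 1 / s + (E - (g + 1)) * psiz x g m s * (- ((x - m) / s) / s)\<bar> \<le> (1 + E) / w * Bf x g m s"
    using h_bounds[OF s g w0 w1] by (simp_all add: E_def w_def)
  have gen: "\<bar>a * F * h\<bar> \<le> a * Bf x g m s * C * w powr \<delta>" if h: "\<bar>h\<bar> \<le> (1 + E) / w * Bf x g m s" for h
  proof -
    have "\<bar>a * F * h\<bar> = a * F * \<bar>h\<bar>" using a F0 by (simp add: abs_mult)
    also have "\<dots> \<le> a * F * ((1 + E) / w * Bf x g m s)"
      using h a F0 by (intro mult_left_mono) auto
    also have "\<dots> = a * Bf x g m s * (F * ((1 + E) / w))" by simp
    also have "\<dots> \<le> a * Bf x g m s * (C * w powr \<delta>)"
      using C' a B0 by (intro mult_left_mono) auto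
    finally show ?thesis by simp
  qed
  show "\<bar>D1f a x g m s\<bar> \<le> a * Bf x g m s * C * (1 + g * ((x - m) / s)) powr \<delta>"
    using gen[OF hb(1)] by (simp add: D1f_def F_def E_def w_def)
  show "\<bar>D2f a x g m s\<bar> \<le> a * Bf x g m s * C * (1 + g * ((x - m) / s)) powr \<delta>"
    using gen[OF hb(2)] by (simp add: D2f_def F_def E_def w_def)
  show "\<bar>D3f a x g m s\<bar> \<le> a * Bf x g m s * C * (1 + g * ((x - m) / s)) powr \<delta>"
    using gen[OF hb(3)] by (simp add: D3f_def F_def E_def w_def)
  have "w + E * w > 0" using wp E0 by (intro add_pos_pos mult_pos_pos) auto
  then have nz: "w + E * w \<noteq> 0" by simp
  have "F = F * ((1 + E) / w) * (w / (1 + E))" using wp E0 nz by (simp add: field_simps)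
  also have "\<dots> \<le> C * w powr \<delta> * (w / (1 + E))"
    using C' wp E0 by (intro mult_right_mono) auto
  also have "\<dots> \<le> C * w powr \<delta> * w"
  proof (rule mult_left_mono)
    show "w / (1 + E) \<le> w" using wp E0 by (simp add: divide_le_eq field_simps)
    have "0 \<le> F * ((1 + E) / w)" using F0 E0 wp by simp
    then show "0 \<le> C * w powr \<delta>" using C' by linarith
  qed
  also have "\<dots> = C * w powr (1 + \<delta>)" using wp by (simp add: powr_add)
  finally show "FF a x g m s \<le> C * (1 + g * ((x - m) / s)) powr (1 + \<delta>)" by (simp add: F_def w_def)
qed

definition P4 :: "(real \<Rightarrow> real \<Rightarrow> real \<Rightarrow> real \<Rightarrow> 'b) \<Rightarrow> real \<times> real \<times> real \<times> real \<Rightarrow> 'b" where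
  "P4 f p = f (fst p) (fst (snd p)) (fst (snd (snd p))) (snd (snd (snd p)))"

lemma P4_simp [simp]: "P4 f (x, g, m, s) = f x g m s" by (simp add: P4_def)

definition WW :: "real \<Rightarrow> real \<Rightarrow> real \<Rightarrow> real \<Rightarrow> real" where
  "WW x g m s = 1 + g * ((x - m) / s)"

definition SS :: "real \<Rightarrow> real \<Rightarrow> real \<Rightarrow> real \<Rightarrow> real" where
  "SS x g m s = s"
definition GG :: "real \<Rightarrow> real \<Rightarrow> real \<Rightarrow> real \<Rightarrow> real" where
  "GG x g m s = g"

lemma isCont_WW: "snd (snd (snd p)) \<noteq> 0 \<Longrightarrow> isCont (P4 WW) p"
  unfolding P4_def WW_def by (intro continuous_intros) auto
lemma isCont_SS: "isCont (P4 SS) p"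
  unfolding P4_def SS_def by (intro continuous_intros)
lemma isCont_GG: "isCont (P4 GG) p"
  unfolding P4_def GG_def by (intro continuous_intros)
lemma isCont_Bf: "snd (snd (snd p)) \<noteq> 0 \<Longrightarrow> fst (snd p) \<noteq> 0 \<Longrightarrow> isCont (P4 Bf) p"
  unfolding P4_def Bf_def by (intro continuous_intros) auto

definition Good :: "real \<Rightarrow> real \<Rightarrow> real \<Rightarrow> real \<Rightarrow> real \<Rightarrow> real \<Rightarrow> real \<Rightarrow> bool" where
  "Good a M \<delta> x g m s \<longleftrightarrow> 0 < s \<and> (0 < WW x g m s \<longrightarrow>
     \<bar>D1f a x g m s\<bar> \<le> M * WW x g m s powr \<delta> \<and> \<bar>D2f a x g m s\<bar> \<le> M * WW x g m s powr \<delta> \<and>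
     \<bar>D3f a x g m s\<bar> \<le> M * WW x g m s powr \<delta> \<and> FF a x g m s \<le> M * WW x g m s powr (1 + \<delta>))"

lemma boundary_gen:
  fixes C :: "real \<times> real \<times> real \<times> real \<Rightarrow> real"
  assumes a: "0 < a" "a \<le> 1" and d: "\<delta> > 0" and Cc: "isCont C p0"
    and s0: "snd (snd (snd p0)) > 0" and g0: "fst (snd p0) \<noteq> 0"
    and ev: "eventually (\<lambda>p. 0 < P4 SS p \<and> P4 GG p \<noteq> 0 \<and> P4 WW p < 1 \<and> 0 \<le> C p \<and>
       (0 < P4 WW p \<longrightarrow> P4 (FF a) p * ((1 + exp (- P4 psi p)) / P4 WW p) \<le> C p * P4 WW p powr \<delta>)) (nhds p0)"
  shows "\<exists>M\<ge>0. eventually (\<lambda>p. P4 (Good a M \<delta>) p) (nhds p0)"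
proof -
  define B0 where "B0 = P4 Bf p0"
  define C0 where "C0 = C p0"
  define M where "M = (B0 + 1) * (C0 + 1) + (C0 + 1)"
  have evB: "eventually (\<lambda>p. P4 Bf p < B0 + 1) (nhds p0)"
    unfolding B0_def by (rule ev_nhds_lt) (use isCont_Bf s0 g0 in auto)
  have evC: "eventually (\<lambda>p. C p < C0 + 1) (nhds p0)"
    unfolding C0_def by (rule ev_nhds_lt[OF Cc]) auto
  have "eventually (\<lambda>p. P4 (Good a M \<delta>) p) (nhds p0)"
    using ev evB evC
  proof eventually_elim
    case (elim p)
    obtain x g m s where p: "p = (x, g, m, s)" by (cases p) auto
    from elim have s: "0 < s" and g: "g \<noteq> 0" and w1: "WW x g m s < 1" and Cp: "0 \<le> C p"
      and ff: "0 < WW x g m s \<Longrightarrow> FF a x g m s * ((1 + exp (- psi x g m s)) / WW x g m s) \<le> C p * WW x g m s powr \<delta>"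
      and Bp: "Bf x g m s < B0 + 1" and Cp1: "C p < C0 + 1"
      by (auto simp: p SS_def GG_def)
    have Bnn: "Bf x g m s \<ge> 0" using s g by (simp add: Bf_def)
    have C0nn: "C0 + 1 > 0" using Cp Cp1 by linarith
    have B0nn: "B0 + 1 > 0" using Bnn Bp by linarith
    show ?case unfolding p P4_simp Good_def
    proof (intro conjI impI s)
      assume w0: "0 < WW x g m s"
      note pd = pointwise_D[OF a(1) s g w0[unfolded WW_def] w1[unfolded WW_def] ff[OF w0, unfolded WW_def]]
      have wd: "0 \<le> WW x g m s powr \<delta>" by simp
      have key: "a * Bf x g m s * C p * WW x g m s powr \<delta> \<le> M * WW x g m s powr \<delta>"
      proof (rule mult_right_mono[OF _ wd])
        have "a * Bf x g m s * C p \<le> 1 * Bf x g m s * C p"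
          using a Bnn Cp by (intro mult_right_mono) auto
        also have "\<dots> \<le> (B0 + 1) * (C0 + 1)"
          using Bnn Cp Bp Cp1 by (simp add: mult_mono)
        also have "\<dots> \<le> M" using C0nn by (simp add: M_def)
        finally show "a * Bf x g m s * C p \<le> M" .
      qed
      show "\<bar>D1f a x g m s\<bar> \<le> M * WW x g m s powr \<delta>" using pd(1) key by (simp add: WW_def)
      show "\<bar>D2f a x g m s\<bar> \<le> M * WW x g m s powr \<delta>" using pd(2) key by (simp add: WW_def)
      show "\<bar>D3f a x g m s\<bar> \<le> M * WW x g m s powr \<delta>" using pd(3) key by (simp add: WW_def)
      have "C p \<le> M" using Cp1 B0nn C0nn by (simp add: M_def) (smt (verit) mult_nonneg_nonneg)
      then have "C p * WW x g m s powr (1 + \<delta>) \<le> M * WW x g m s powr (1 + \<delta>)"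
        by (intro mult_right_mono) auto
      then show "FF a x g m s \<le> M * WW x g m s powr (1 + \<delta>)" using pd(4) by (simp add: WW_def)
    qed
  qed
  moreover have "M \<ge> 0"
  proof -
    have "0 \<le> C p0" using eventually_nhds_x_imp_x[OF ev] by simp
    moreover have "0 \<le> B0" unfolding B0_def P4_def Bf_def using s0 g0 by simp
    ultimately show ?thesis unfolding M_def C0_def[symmetric] by (simp add: add_nonneg_nonneg)
  qed
  ultimately show ?thesis by blast
qed

lemma boundary_est:
  assumes a: "1/2 \<le> a" "a < 1" and s0: "s0 > 0" and g0: "g0 > - a / (1 + a)" and w0: "WW x0 g0 m0 s0 = 0"
  shows "\<exists>\<delta>>0. \<exists>M\<ge>0. eventually (\<lambda>p. P4 (Good a M \<delta>) p) (nhds (x0, g0, m0, s0))"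
proof -
  define p0 where "p0 = (x0, g0, m0, s0)"
  have a0: "0 < a" "a \<le> 1" using a by auto
  have g0nz: "g0 \<noteq> 0" using w0 by (auto simp: WW_def)
  have evs: "eventually (\<lambda>p. P4 SS p > 0) (nhds p0)"
    by (rule ev_nhds_gt[OF isCont_SS]) (simp add: p0_def SS_def s0)
  have evw: "eventually (\<lambda>p. P4 WW p < 1) (nhds p0)"
    by (rule ev_nhds_lt) (use isCont_WW[of p0] s0 w0 in \<open>auto simp: p0_def\<close>)
  have Cs: "isCont (\<lambda>p. 2 * exp (- a * ln (P4 SS p))) p0"
    unfolding P4_def SS_def using s0 by (intro continuous_intros) (auto simp: p0_def)
  show ?thesis
  proof (cases "g0 < 0")
    case True
    define c where "c = (\<lambda>g::real. - a * (g + 1) / g)"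
    have c0: "c g0 > 1"
    proof -
      have "- a < g0 * (1 + a)" using g0 a0 by (simp add: field_simps)
      then have "- a * (g0 + 1) < g0" by (simp add: algebra_simps)
      then show ?thesis using True by (simp add: c_def field_simps)
    qed
    define \<delta> where "\<delta> = (c g0 - 1) / 2"
    have d: "\<delta> > 0" using c0 by (simp add: \<delta>_def)
    have evg: "eventually (\<lambda>p. P4 GG p < 0) (nhds p0)"
      by (rule ev_nhds_lt[OF isCont_GG]) (simp add: p0_def GG_def True)
    have evc: "eventually (\<lambda>p. c (P4 GG p) > 1 + \<delta>) (nhds p0)"
    proof (rule ev_nhds_gt)
      show "isCont (\<lambda>p. c (P4 GG p)) p0"
        unfolding c_def P4_def GG_def using g0nz by (intro continuous_intros) (auto simp: p0_def)
      have aux: "\<And>t::real. 1 < t \<Longrightarrow> 1 + (t - 1) / 2 < t" by (simp add: field_simps)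
      show "c (P4 GG p0) > 1 + \<delta>" using aux[OF c0] unfolding p0_def GG_def \<delta>_def P4_simp .
    qed
    have "eventually (\<lambda>p. 0 < P4 SS p \<and> P4 GG p \<noteq> 0 \<and> P4 WW p < 1 \<and> 0 \<le> 2 * exp (- a * ln (P4 SS p)) \<and>
       (0 < P4 WW p \<longrightarrow> P4 (FF a) p * ((1 + exp (- P4 psi p)) / P4 WW p) \<le> 2 * exp (- a * ln (P4 SS p)) * P4 WW p powr \<delta>)) (nhds p0)"
      using evs evg evw evc
    proof eventually_elim
      case (elim p)
      obtain x g m s where p: "p = (x, g, m, s)" by (cases p) auto
      from elim have s: "0 < s" and g: "g < 0" and w1: "WW x g m s < 1" and cg: "1 + \<delta> < c g"
        by (auto simp: p SS_def GG_def)
      show ?case unfolding p P4_simp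
      proof (intro conjI impI)
        assume w0: "0 < WW x g m s"
        show "FF a x g m s * ((1 + exp (- psi x g m s)) / WW x g m s) \<le> 2 * exp (- a * ln (SS x g m s)) * WW x g m s powr \<delta>"
          using FF_neg[OF a0(1) s g w0[unfolded WW_def] w1[unfolded WW_def] d] cg
          by (simp add: WW_def SS_def c_def)
      qed (use s g w1 in \<open>auto simp: SS_def GG_def\<close>)
    qed
    from boundary_gen[OF a0 d Cs _ _ this] s0 g0nz d show ?thesis by (auto simp: p0_def)
  next
    case False
    then have gp: "g0 > 0" using g0nz by simp
    define C where "C = (\<lambda>p. 2 * exp (- a * ln (P4 SS p)) * exp (Kp a (P4 GG p)))"
    have ag: "a * (g0 + 1) > 0" using a0 gp by simp
    then have N0: "a * (g0 + 1) + 1 + 2 * g0 > 0" using gp by linarith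
    have Cc: "isCont C p0"
      unfolding C_def P4_def SS_def GG_def Kp_def
      by (intro continuous_intros) (use s0 gp a0 N0 in \<open>auto simp: p0_def\<close>)
    have evg: "eventually (\<lambda>p. P4 GG p > 0) (nhds p0)"
      by (rule ev_nhds_gt[OF isCont_GG]) (simp add: p0_def GG_def gp)
    have "eventually (\<lambda>p. 0 < P4 SS p \<and> P4 GG p \<noteq> 0 \<and> P4 WW p < 1 \<and> 0 \<le> C p \<and>
       (0 < P4 WW p \<longrightarrow> P4 (FF a) p * ((1 + exp (- P4 psi p)) / P4 WW p) \<le> C p * P4 WW p powr 1)) (nhds p0)"
      using evs evg evw
    proof eventually_elim
      case (elim p)
      obtain x g m s where p: "p = (x, g, m, s)" by (cases p) auto
      from elim have s: "0 < s" and g: "g > 0" and w1: "WW x g m s < 1"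
        by (auto simp: p SS_def GG_def)
      show ?case unfolding p P4_simp
      proof (intro conjI impI)
        assume w0: "0 < WW x g m s"
        show "FF a x g m s * ((1 + exp (- psi x g m s)) / WW x g m s) \<le> C (x, g, m, s) * WW x g m s powr 1"
          using FF_pos[OF a0(1) s g w0[unfolded WW_def] w1[unfolded WW_def]] w0
          by (simp add: WW_def SS_def GG_def C_def)
      qed (use s g w1 in \<open>auto simp: SS_def GG_def C_def\<close>)
    qed
    from boundary_gen[OF a0 _ Cc _ _ this] s0 g0nz
    have "\<exists>M\<ge>0. eventually (\<lambda>p. P4 (Good a M 1) p) (nhds (x0, g0, m0, s0))" by (auto simp: p0_def)
    then show ?thesis by (intro exI[of _ 1]) auto
  qed
qed




lemma u_eq: "WW x g m s > 0 \<Longrightarrow> gev_u g m s x = exp (- psi x g m s)"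
proof (cases "g = 0")
  case True then show ?thesis by (simp add: gev_u_def psi_def phi_def)
next
  case False
  assume w: "WW x g m s > 0"
  have "psi x g m s = ln (1 + g * ((x - m) / s)) / g" using psi_eq[OF False] w by (simp add: WW_def)
  then show ?thesis using False w by (simp add: gev_u_def WW_def powr_def)
qed

lemma dens_pos:
  assumes s: "s > 0" and w: "WW x g m s > 0"
  shows "gev_density (g, m, s) x powr a = FF a x g m s"
proof -
  define P where "P = psi x g m s"
  have u: "gev_u g m s x = exp (- P)" using u_eq[OF w] by (simp add: P_def)
  have "gev_density (g, m, s) x = (1 / s) * exp (- exp (- P)) * exp (- P) powr (g + 1)"
    using w by (simp add: gev_density_def u WW_def Let_def)
  also have "exp (- P) powr (g + 1) = exp (- ((g + 1) * P))" by (simp add: powr_def)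
  also have "1 / s = exp (- ln s)" using s by (simp add: exp_minus inverse_eq_divide)
  also have "exp (- ln s) * exp (- exp (- P)) * exp (- ((g + 1) * P)) = exp (- ln s - exp (- P) - (g + 1) * P)"
    by (simp add: mult_exp_exp)
  finally have d: "gev_density (g, m, s) x = exp (- ln s - exp (- P) - (g + 1) * P)" .
  show ?thesis by (simp add: d powr_def FF_def P_def)
qed

lemma dens_nonpos:
  assumes w: "\<not> WW x g m s > 0"
  shows "gev_density (g, m, s) x powr a = 0"
  using w by (simp add: gev_density_def WW_def Let_def)

lemma isCont_phi_comp[continuous_intros]:
  "continuous (at p within S) f \<Longrightarrow> f p > -1 \<Longrightarrow> continuous (at p within S) (\<lambda>q. phi (f q))"
  by (rule continuous_within_compose3[OF phi_cont])
lemma isCont_phi'_comp[continuous_intros]: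
  "continuous (at p within S) f \<Longrightarrow> f p > -1 \<Longrightarrow> continuous (at p within S) (\<lambda>q. phi' (f q))"
  by (rule continuous_within_compose3[OF phi'_cont])

lemma isCont_D_int:
  assumes s: "s > 0" and w: "0 < 1 + g * ((x - m) / s)"
  shows "isCont (P4 (D1f a)) (x, g, m, s)" "isCont (P4 (D2f a)) (x, g, m, s)" "isCont (P4 (D3f a)) (x, g, m, s)"
  unfolding P4_def D1f_def D2f_def D3f_def FF_def psi_def psig_def psiz_def
  by (intro continuous_intros; use s w in simp)+

definition Dg :: "(real \<Rightarrow> real \<Rightarrow> real \<Rightarrow> real \<Rightarrow> real \<Rightarrow> real) \<Rightarrow> real \<Rightarrow> real \<Rightarrow> real \<times> real \<times> real \<Rightarrow> real" where
  "Dg Df a x \<theta> = (case \<theta> of (g, m, s) \<Rightarrow> if 0 < s \<and> 0 < WW x g m s then Df a x g m s else 0)"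

lemma Dg_eq: "(\<lambda>(x, \<theta>). Dg Df a x \<theta>) = (\<lambda>q. if 0 < P4 SS q \<and> 0 < P4 WW q then P4 (Df a) q else 0)"
  by (auto simp: Dg_def P4_def SS_def fun_eq_iff split: prod.splits)

lemma open_Theta: "open (Theta_a a)"
  unfolding Theta_a_def by (intro open_Times open_greaterThan open_UNIV)

lemma cont_Dg:
  assumes Hc: "\<And>x g m s. 0 < s \<Longrightarrow> 0 < 1 + g * ((x - m) / s) \<Longrightarrow> isCont (P4 (Df a)) (x, g, m, s)"
    and Hb: "\<And>x g m s. 0 < s \<Longrightarrow> g > - a / (1 + a) \<Longrightarrow> WW x g m s = 0 \<Longrightarrow>
       \<exists>\<delta>>0. \<exists>M\<ge>0. eventually (\<lambda>p. 0 < P4 SS p \<and> (0 < P4 WW p \<longrightarrow> \<bar>P4 (Df a) p\<bar> \<le> M * P4 WW p powr \<delta>)) (nhds (x, g, m, s))"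
  shows "continuous_on (UNIV \<times> Theta_a a) (\<lambda>(x, \<theta>). Dg Df a x \<theta>)"
proof -
  define F where "F = (\<lambda>q. if 0 < P4 SS q \<and> 0 < P4 WW q then P4 (Df a) q else 0)"
  have "isCont F p" if p: "p \<in> UNIV \<times> Theta_a a" for p
  proof -
    obtain x g m s where pe: "p = (x, g, m, s)" by (cases p) auto
    have s: "0 < s" and g: "g > - a / (1 + a)" using p by (auto simp: pe Theta_a_def)
    have cW: "isCont (P4 WW) p" by (rule isCont_WW) (simp add: pe s[THEN less_imp_neq, symmetric])
    have evs: "eventually (\<lambda>q. 0 < P4 SS q) (nhds p)"
      by (rule ev_nhds_gt[OF isCont_SS]) (simp add: pe SS_def s)
    consider "WW x g m s > 0" | "WW x g m s < 0" | "WW x g m s = 0" by linarith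
    then show ?thesis
    proof cases
      case 1
      have evw: "eventually (\<lambda>q. 0 < P4 WW q) (nhds p)"
        by (rule ev_nhds_gt[OF cW]) (simp add: pe 1)
      have "eventually (\<lambda>q. F q = P4 (Df a) q) (nhds p)"
        using evs evw by eventually_elim (simp add: F_def)
      then show ?thesis
        using Hc[OF s 1[unfolded WW_def]] by (subst isCont_cong) (auto simp: pe)
    next
      case 2
      have evw: "eventually (\<lambda>q. P4 WW q < 0) (nhds p)"
        by (rule ev_nhds_lt[OF cW]) (simp add: pe 2)
      have "eventually (\<lambda>q. F q = 0) (nhds p)"
        using evw by eventually_elim (simp add: F_def)
      then show ?thesis by (subst isCont_cong) auto
    next
      case 3
      obtain \<delta> M where d: "\<delta> > 0" and M: "M \<ge> 0" and ev:
        "eventually (\<lambda>q. 0 < P4 SS q \<and> (0 < P4 WW q \<longrightarrow> \<bar>P4 (Df a) q\<bar> \<le> M * P4 WW q powr \<delta>)) (nhds p)"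
        using Hb[OF s g 3] pe by blast
      have Fp: "F p = 0" by (simp add: F_def pe 3)
      have evb: "eventually (\<lambda>q. norm (F q) \<le> M * max (P4 WW q) 0 powr \<delta>) (nhds p)"
        using ev by eventually_elim (auto simp: F_def)
      then have evb': "eventually (\<lambda>q. norm (F q) \<le> M * max (P4 WW q) 0 powr \<delta>) (at p)"
        by (simp add: eventually_at_filter eventually_mono)
      have "((\<lambda>q. max (P4 WW q) 0) \<longlongrightarrow> max (P4 WW p) 0) (at p)"
        using cW by (intro tendsto_max tendsto_const) (simp add: isCont_def)
      then have t0: "((\<lambda>q. max (P4 WW q) 0) \<longlongrightarrow> 0) (at p)" by (simp add: pe 3)
      have "((\<lambda>q. max (P4 WW q) 0 powr \<delta>) \<longlongrightarrow> 0) (at p)"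
        by (rule tendsto_zero_powrI[OF t0 tendsto_const _ d]) simp
      then have "((\<lambda>q. M * max (P4 WW q) 0 powr \<delta>) \<longlongrightarrow> 0) (at p)"
        by (rule tendsto_mult_right_zero)
      then have "(F \<longlongrightarrow> 0) (at p)" by (rule Lim_null_comparison[OF evb'])
      then show ?thesis by (simp add: isCont_def Fp)
    qed
  qed
  then show ?thesis unfolding Dg_eq F_def[symmetric]
    by (subst continuous_on_eq_continuous_at) (auto intro: open_Times open_Theta)
qed

lemma WW_lip:
  assumes s: "s > 0" and b: "s0 + g0 * (x - m0) = 0"
  shows "\<bar>WW x g m s\<bar> \<le> (1 + \<bar>x - m\<bar> + \<bar>g0\<bar>) / s * norm ((g, m, s) - (g0, m0, s0))"
proof -
  define n where "n = norm ((g, m, s) - (g0, m0, s0))"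
  have ng: "\<bar>g - g0\<bar> \<le> n" unfolding n_def using norm_fst_le[of "g - g0" "(m - m0, s - s0)"] by simp
  have nm2: "norm (m - m0, s - s0) \<le> n" unfolding n_def using norm_snd_le[of "(m - m0, s - s0)" "g - g0"] by simp
  have nm: "\<bar>m - m0\<bar> \<le> n" using norm_fst_le[of "m - m0" "s - s0"] nm2 by simp
  have ns: "\<bar>s - s0\<bar> \<le> n" using norm_snd_le[of "s - s0" "m - m0"] nm2 by simp
  have num: "s + g * (x - m) = (s - s0) + (g - g0) * (x - m) - g0 * (m - m0)"
    using b by (simp add: algebra_simps)
  have "\<bar>s + g * (x - m)\<bar> \<le> \<bar>s - s0\<bar> + \<bar>g - g0\<bar> * \<bar>x - m\<bar> + \<bar>g0\<bar> * \<bar>m - m0\<bar>"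
    unfolding num by (simp add: abs_mult[symmetric])
  also have "\<dots> \<le> n + n * \<bar>x - m\<bar> + \<bar>g0\<bar> * n"
    using ns ng nm by (intro add_mono mult_right_mono mult_left_mono) auto
  also have "\<dots> = (1 + \<bar>x - m\<bar> + \<bar>g0\<bar>) * n" by (simp add: algebra_simps)
  finally have A: "\<bar>s + g * (x - m)\<bar> \<le> (1 + \<bar>x - m\<bar> + \<bar>g0\<bar>) * n" .
  have "WW x g m s = (s + g * (x - m)) / s" using s by (simp add: WW_def field_simps)
  then have "\<bar>WW x g m s\<bar> = \<bar>s + g * (x - m)\<bar> / s" using s by (simp add: abs_div)
  also have "\<dots> \<le> (1 + \<bar>x - m\<bar> + \<bar>g0\<bar>) * n / s" using A s by (intro divide_right_mono) auto
  finally show ?thesis by (simp add: n_def)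
qed

lemma deriv_Dg:
  assumes a: "1/2 \<le> a" "a < 1" and th: "\<theta> \<in> Theta_a a"
  shows "((\<lambda>t. gev_density t x powr a) has_derivative
     (\<lambda>h. Dg D1f a x \<theta> * fst h + Dg D2f a x \<theta> * fst (snd h) + Dg D3f a x \<theta> * snd (snd h))) (at \<theta>)"
proof -
  obtain g m s where te: "\<theta> = (g, m, s)" by (cases \<theta>) auto
  have s: "0 < s" and g: "g > - a / (1 + a)" using th by (auto simp: te Theta_a_def)
  have WWeq: "WW x g' m' s' = (s' + g' * (x - m')) / s'" if "s' > 0" for g' m' s'
    using that by (simp add: WW_def field_simps)
  have WWpos: "0 < WW x g' m' s' \<longleftrightarrow> 0 < s' + g' * (x - m')" if "s' > 0" for g' m' s'
    using that by (simp add: WWeq zero_less_divide_iff)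
  have WWneg: "WW x g' m' s' < 0 \<longleftrightarrow> s' + g' * (x - m') < 0" if "s' > 0" for g' m' s'
    using that by (simp add: WWeq divide_less_0_iff)
  have cont1: "continuous_on UNIV (\<lambda>t::real \<times> real \<times> real. snd (snd t) + fst t * (x - fst (snd t)))"
    by (intro continuous_intros)
  have cont2: "continuous_on UNIV (\<lambda>t::real \<times> real \<times> real. snd (snd t))"
    by (intro continuous_intros)
  consider "WW x g m s > 0" | "WW x g m s < 0" | "WW x g m s = 0" by linarith
  then show ?thesis
  proof cases
    case 1
    define U where "U = {t::real \<times> real \<times> real. 0 < snd (snd t)} \<inter> {t. 0 < snd (snd t) + fst t * (x - fst (snd t))}"
    have oU: "open U" unfolding U_def
      by (intro open_Int open_Collect_less cont1 cont2 continuous_on_const)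
    have tU: "\<theta> \<in> U" using 1 s by (simp add: U_def te WWpos)
    have eq: "FF a x (fst t) (fst (snd t)) (snd (snd t)) = gev_density t x powr a" if "t \<in> U" for t
    proof -
      obtain g' m' s' where t: "t = (g', m', s')" by (cases t) auto
      have "0 < s'" "0 < WW x g' m' s'" using that by (auto simp: U_def t WWpos)
      then show ?thesis by (simp add: t dens_pos)
    qed
    have D: "((\<lambda>t. FF a x (fst t) (fst (snd t)) (snd (snd t))) has_derivative
     (\<lambda>h. D1f a x g m s * fst h + D2f a x g m s * fst (snd h) + D3f a x g m s * snd (snd h))) (at (g,m,s))"
      by (rule FF_deriv) (use s 1 in \<open>auto simp: WW_def\<close>)
    have "((\<lambda>t. gev_density t x powr a) has_derivative
     (\<lambda>h. D1f a x g m s * fst h + D2f a x g m s * fst (snd h) + D3f a x g m s * snd (snd h))) (at \<theta>)"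
      by (rule has_derivative_transform_within_open[OF D[folded te] oU tU eq])
    then show ?thesis using s 1 by (simp add: te Dg_def)
  next
    case 2
    define V where "V = {t::real \<times> real \<times> real. 0 < snd (snd t)} \<inter> {t. snd (snd t) + fst t * (x - fst (snd t)) < 0}"
    have oV: "open V" unfolding V_def
      by (intro open_Int open_Collect_less cont1 cont2 continuous_on_const)
    have tV: "\<theta> \<in> V" using 2 s by (simp add: V_def te WWneg)
    have eq: "0 = gev_density t x powr a" if "t \<in> V" for t
    proof -
      obtain g' m' s' where t: "t = (g', m', s')" by (cases t) auto
      have "0 < s'" "WW x g' m' s' < 0" using that by (auto simp: V_def t WWneg)
      then show ?thesis by (simp add: t dens_nonpos)
    qed
    have "((\<lambda>t. gev_density t x powr a) has_derivative (\<lambda>h. 0)) (at \<theta>)"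
      by (rule has_derivative_transform_within_open[OF has_derivative_const oV tV eq])
    then show ?thesis using s 2 by (simp add: te Dg_def)
  next
    case 3
    obtain \<delta> M where d: "\<delta> > 0" and M: "M \<ge> 0" and ev: "eventually (\<lambda>p. P4 (Good a M \<delta>) p) (nhds (x, g, m, s))"
      using boundary_est[OF a s g 3] by blast
    have lim: "((\<lambda>t. (x, t)) \<longlongrightarrow> (x, \<theta>)) (nhds \<theta>)"
      by (rule tendsto_Pair[OF tendsto_const filterlim_ident])
    have ev2: "eventually (\<lambda>t. P4 (Good a M \<delta>) (x, t)) (nhds \<theta>)"
      using lim ev unfolding filterlim_iff te by blast
    define Lc where "Lc = (\<lambda>t::real \<times> real \<times> real. (1 + \<bar>x - fst (snd t)\<bar> + \<bar>g\<bar>) / snd (snd t))"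
    define L where "L = Lc \<theta> + 1"
    have L0: "L > 0" using s by (simp add: L_def Lc_def te add_pos_nonneg)
    have evL: "eventually (\<lambda>t. Lc t < L) (nhds \<theta>)"
    proof (rule ev_nhds_lt)
      show "isCont Lc \<theta>" unfolding Lc_def using s by (intro continuous_intros) (auto simp: te)
    qed (simp add: L_def)
    have b: "s + g * (x - m) = 0" using 3 s by (simp add: WWeq)
    have f0: "gev_density \<theta> x powr a = 0" using 3 by (simp add: te dens_nonpos)
    have evB: "eventually (\<lambda>t. \<bar>gev_density t x powr a\<bar> \<le> M * (L * norm (t - \<theta>)) powr (1 + \<delta>)) (nhds \<theta>)"
      using ev2 evL
    proof eventually_elim
      case (elim t)
      obtain g' m' s' where t: "t = (g', m', s')" by (cases t) auto
      from elim have s': "0 < s'" and ff: "0 < WW x g' m' s' \<Longrightarrow> FF a x g' m' s' \<le> M * WW x g' m' s' powr (1 + \<delta>)"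
        and Lt: "Lc t < L"
        by (auto simp: t Good_def)
      have lip: "\<bar>WW x g' m' s'\<bar> \<le> L * norm (t - \<theta>)"
      proof -
        have "\<bar>WW x g' m' s'\<bar> \<le> Lc t * norm (t - \<theta>)"
          using WW_lip[OF s' b] by (simp add: Lc_def t te)
        also have "\<dots> \<le> L * norm (t - \<theta>)" using Lt by (intro mult_right_mono) auto
        finally show ?thesis .
      qed
      have rhs0: "0 \<le> M * (L * norm (t - \<theta>)) powr (1 + \<delta>)" using M by simp
      show ?case
      proof (cases "0 < WW x g' m' s'")
        case True
        have "gev_density t x powr a = FF a x g' m' s'" by (simp add: t dens_pos s' True)
        moreover have "FF a x g' m' s' > 0" by (simp add: FF_def)
        moreover have "WW x g' m' s' powr (1 + \<delta>) \<le> (L * norm (t - \<theta>)) powr (1 + \<delta>)"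
          using True lip d by (intro powr_mono2) auto
        ultimately show ?thesis using ff[OF True] M
          by (smt (verit) mult_left_mono)
      next
        case False
        then show ?thesis using rhs0 by (simp add: t dens_nonpos)
      qed
    qed
    have Dz: "Dg Df a x \<theta> = 0" for Df using 3 by (simp add: te Dg_def)
    have "((\<lambda>t. gev_density t x powr a) has_derivative (\<lambda>h. 0)) (at \<theta>)"
      unfolding has_derivative_iff_norm
    proof (intro conjI bounded_linear_zero)
      define G where "G = (\<lambda>y. M * L powr (1 + \<delta>) * norm (y - \<theta>) powr \<delta>)"
      have "eventually (\<lambda>y. norm (norm (gev_density y x powr a - gev_density \<theta> x powr a - 0) / norm (y - \<theta>)) \<le> G y) (at \<theta>)"
        using evB unfolding eventually_at_filter
      proof (elim eventually_mono, intro impI)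
        fix y assume B: "\<bar>gev_density y x powr a\<bar> \<le> M * (L * norm (y - \<theta>)) powr (1 + \<delta>)" and ne: "y \<noteq> \<theta>"
        define n where "n = norm (y - \<theta>)"
        have n0: "n > 0" using ne by (simp add: n_def)
        have "(L * n) powr (1 + \<delta>) = L powr (1 + \<delta>) * (n * n powr \<delta>)"
          using L0 n0 by (simp add: powr_mult powr_add)
        then have "\<bar>gev_density y x powr a\<bar> / n \<le> M * L powr (1 + \<delta>) * (n * n powr \<delta>) / n"
          using B n0 by (intro divide_right_mono) (auto simp: n_def mult.assoc)
        also have "\<dots> = G y" using n0 by (simp add: G_def n_def)
        finally show "norm (norm (gev_density y x powr a - gev_density \<theta> x powr a - 0) / norm (y - \<theta>)) \<le> G y"
          by (simp add: f0 n_def)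
      qed
      moreover have "(G \<longlongrightarrow> 0) (at \<theta>)"
      proof -
        have "((\<lambda>y. y - \<theta>) \<longlongrightarrow> 0) (at \<theta>)" by (rule LIM_zero) (rule tendsto_ident_at)
        then have "((\<lambda>y. norm (y - \<theta>)) \<longlongrightarrow> 0) (at \<theta>)" by (rule tendsto_norm_zero)
        then have "((\<lambda>y. norm (y - \<theta>) powr \<delta>) \<longlongrightarrow> 0) (at \<theta>)"
          by (rule tendsto_zero_powrI[OF _ tendsto_const _ d]) simp
        then show ?thesis unfolding G_def by (rule tendsto_mult_right_zero)
      qed
      ultimately show "((\<lambda>y. norm (gev_density y x powr a - gev_density \<theta> x powr a - 0) / norm (y - \<theta>)) \<longlongrightarrow> 0) (at \<theta>)"
        by (rule Lim_null_comparison)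
    qed
    then show ?thesis by (simp add: Dz)
  qed
qed

lemma Hb_all:
  assumes a: "1/2 \<le> a" "a < 1" and s: "0 < s" and g: "g > - a / (1 + a)" and w: "WW x g m s = 0"
  shows "\<exists>\<delta>>0. \<exists>M\<ge>0. eventually (\<lambda>p. 0 < P4 SS p \<and> (0 < P4 WW p \<longrightarrow> \<bar>P4 (D1f a) p\<bar> \<le> M * P4 WW p powr \<delta>)) (nhds (x, g, m, s))"
    and "\<exists>\<delta>>0. \<exists>M\<ge>0. eventually (\<lambda>p. 0 < P4 SS p \<and> (0 < P4 WW p \<longrightarrow> \<bar>P4 (D2f a) p\<bar> \<le> M * P4 WW p powr \<delta>)) (nhds (x, g, m, s))"
    and "\<exists>\<delta>>0. \<exists>M\<ge>0. eventually (\<lambda>p. 0 < P4 SS p \<and> (0 < P4 WW p \<longrightarrow> \<bar>P4 (D3f a) p\<bar> \<le> M * P4 WW p powr \<delta>)) (nhds (x, g, m, s))"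
proof -
  obtain \<delta> M where d: "\<delta> > 0" and M: "M \<ge> 0" and ev: "eventually (\<lambda>p. P4 (Good a M \<delta>) p) (nhds (x, g, m, s))"
    using boundary_est[OF a s g w] by blast
  have ev3: "eventually (\<lambda>p. 0 < P4 SS p \<and> (0 < P4 WW p \<longrightarrow> \<bar>P4 (D1f a) p\<bar> \<le> M * P4 WW p powr \<delta>) \<and>
     (0 < P4 WW p \<longrightarrow> \<bar>P4 (D2f a) p\<bar> \<le> M * P4 WW p powr \<delta>) \<and> (0 < P4 WW p \<longrightarrow> \<bar>P4 (D3f a) p\<bar> \<le> M * P4 WW p powr \<delta>)) (nhds (x, g, m, s))"
    using ev
  proof eventually_elim
    case (elim p)
    then show ?case by (cases p) (auto simp: Good_def SS_def)
  qed
  show "\<exists>\<delta>>0. \<exists>M\<ge>0. eventually (\<lambda>p. 0 < P4 SS p \<and> (0 < P4 WW p \<longrightarrow> \<bar>P4 (D1f a) p\<bar> \<le> M * P4 WW p powr \<delta>)) (nhds (x, g, m, s))"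
    using d M ev3 by (intro exI[of _ \<delta>] exI[of _ M]) (auto elim: eventually_mono)
  show "\<exists>\<delta>>0. \<exists>M\<ge>0. eventually (\<lambda>p. 0 < P4 SS p \<and> (0 < P4 WW p \<longrightarrow> \<bar>P4 (D2f a) p\<bar> \<le> M * P4 WW p powr \<delta>)) (nhds (x, g, m, s))"
    using d M ev3 by (intro exI[of _ \<delta>] exI[of _ M]) (auto elim: eventually_mono)
  show "\<exists>\<delta>>0. \<exists>M\<ge>0. eventually (\<lambda>p. 0 < P4 SS p \<and> (0 < P4 WW p \<longrightarrow> \<bar>P4 (D3f a) p\<bar> \<le> M * P4 WW p powr \<delta>)) (nhds (x, g, m, s))"
    using d M ev3 by (intro exI[of _ \<delta>] exI[of _ M]) (auto elim: eventually_mono)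
qed

theorem lemmaB5:
  fixes a :: real
  assumes "1/2 \<le> a" and "a < 1"
  shows "\<exists>D1 D2 D3 :: real \<Rightarrow> real \<times> real \<times> real \<Rightarrow> real.
    (\<forall>x. \<forall>\<theta>\<in>Theta_a a.
       ((\<lambda>t. gev_density t x powr a) has_derivative
          (\<lambda>h. D1 x \<theta> * fst h + D2 x \<theta> * fst (snd h) + D3 x \<theta> * snd (snd h))) (at \<theta>))
    \<and> continuous_on (UNIV \<times> Theta_a a) (\<lambda>(x, \<theta>). D1 x \<theta>)
    \<and> continuous_on (UNIV \<times> Theta_a a) (\<lambda>(x, \<theta>). D2 x \<theta>)
    \<and> continuous_on (UNIV \<times> Theta_a a) (\<lambda>(x, \<theta>). D3 x \<theta>)"
proof (rule exI[of _ "Dg D1f a"], rule exI[of _ "Dg D2f a"], rule exI[of _ "Dg D3f a"], intro conjI allI ballI)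
  fix x \<theta> assume "\<theta> \<in> Theta_a a"
  then show "((\<lambda>t. gev_density t x powr a) has_derivative
          (\<lambda>h. Dg D1f a x \<theta> * fst h + Dg D2f a x \<theta> * fst (snd h) + Dg D3f a x \<theta> * snd (snd h))) (at \<theta>)"
    by (rule deriv_Dg[OF assms])
next
  show "continuous_on (UNIV \<times> Theta_a a) (\<lambda>(x, \<theta>). Dg D1f a x \<theta>)"
    by (rule cont_Dg) (auto intro: isCont_D_int Hb_all[OF assms])
next
  show "continuous_on (UNIV \<times> Theta_a a) (\<lambda>(x, \<theta>). Dg D2f a x \<theta>)"
    by (rule cont_Dg) (auto intro: isCont_D_int Hb_all[OF assms])
next
  show "continuous_on (UNIV \<times> Theta_a a) (\<lambda>(x, \<theta>). Dg D3f a x \<theta>)"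
    by (rule cont_Dg) (auto intro: isCont_D_int Hb_all[OF assms])
qed


end
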